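(* Let $\rho$ be a critical radius function on $\mathbb{R}^n$, $p(\cdot),q(\cdot)\in\mathcal{P}^{\log}(\mathbb{R}^n)$ and $s>1$ such that $1<p^-\le p(x)<q(x)\le q^+<\infty$ and $\frac1{p(\cdot)}-\frac1{q(\cdot)}=\frac1{s'}$. If $w\in A^\rho_{p(\cdot),q(\cdot)}$, then $w^{-s}\in A^\rho_{p'(\cdot)/s}$.
   Context: A critical radius function is $\rho:\mathbb{R}^n\to(0,\infty)$ with constants $c_\rho,N_\rho\ge1$ such that $c_\rho^{-1}\rho(x)\big(1+\frac{|x-y|}{\rho(x)}\big)^{-N_\rho}\le\rho(y)\le c_\rho\rho(x)\big(1+\frac{|x-y|}{\rho(x)}\big)^{N_\rho/(N_\rho+1)}$ for all $x,y$. $\mathcal{P}(\mathbb{R}^n)$: measurable $p(\cdot):\mathbb{R}^n\to[1,\infty]$; $p^\pm$ ess sup/inf; $p'(\cdot)$ pointwise conjugate; $\|\cdot\|_{p(\cdot)}$ the Luxemburg norm $\inf\{\lambda>0:\int(|f|/\lambda)^{p(x)}dx\le1\}$. $p\in\mathcal{P}^{\log}$: $p^+<\infty$ and there are $C,p_\infty$ with $|p(x)-p(y)|\le-C/\log|x-y|$ for $|x-y|<1/2$, $|p(x)-p_\infty|\le C/\log(e+|x|)$. A weight is a locally integrable $w$ with $0<w<\infty$ a.e. For an exponent $r(\cdot)$, $w\in A^\rho_{r(\cdot)}$ if there are $\theta\ge0,C>0$ with $\|w\chi_B\|_{r(\cdot)}\|w^{-1}\chi_B\|_{r'(\cdot)}\le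 C|B|(1+\frac r{\rho(x)})^\theta$ for all balls $B=B(x,r)$; $w\in A^\rho_{p(\cdot),q(\cdot)}$ if there are $\theta>0,C>0$ with $\|w\chi_B\|_{q(\cdot)}\|w^{-1}\chi_B\|_{p'(\cdot)}\le C\|\chi_B\|_{q(\cdot)}\|\chi_B\|_{p'(\cdot)}(1+\frac r{\rho(x)})^\theta$ for all balls $B=B(x,r)$. *)

theory Defs
  imports "HOL-Analysis.Analysis"
begin

definition critical_radius :: "('a::euclidean_space \<Rightarrow> real) \<Rightarrow> bool" where
  "critical_radius \<rho> \<longleftrightarrow> (\<forall>x. 0 < \<rho> x) \<and>
     (\<exists>c N. 1 \<le> c \<and> 1 \<le> N \<and>
       (\<forall>x y. inverse c * \<rho> x * (1 + dist x y / \<rho> x) powr (- N) \<le> \<rho> y \<and>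
              \<rho> y \<le> c * \<rho> x * (1 + dist x y / \<rho> x) powr (N / (N + 1))))"

definition var_exp :: "('a::euclidean_space \<Rightarrow> real) \<Rightarrow> bool" where
  "var_exp p \<longleftrightarrow> p \<in> borel_measurable lborel \<and> (\<forall>x. 1 \<le> p x)"

definition conj_exp :: "('a \<Rightarrow> real) \<Rightarrow> 'a \<Rightarrow> real" where
  "conj_exp p = (\<lambda>x. p x / (p x - 1))"

definition P_log :: "('a::euclidean_space \<Rightarrow> real) \<Rightarrow> bool" where
  "P_log p \<longleftrightarrow> var_exp p \<and> (\<exists>M. AE x in lborel. p x \<le> M) \<and>
     (\<exists>C p_inf. (\<forall>x y. dist x y < 1/2 \<longrightarrow> \<bar>p x - p y\<bar> \<le> - C / ln (dist x y)) \<and>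
                (\<forall>x. \<bar>p x - p_inf\<bar> \<le> C / ln (exp 1 + norm x)))"

text \<open>Luxemburg norm (valued in [0,\<infinity>], Inf of empty set is \<infinity>).\<close>
definition lux_norm :: "('a::euclidean_space \<Rightarrow> real) \<Rightarrow> ('a \<Rightarrow> real) \<Rightarrow> ennreal" where
  "lux_norm p f = (INF t\<in>{t::real. 0 < t \<and>
       (\<integral>\<^sup>+ x. ennreal ((\<bar>f x\<bar> / t) powr p x) \<partial>lborel) \<le> 1}. ennreal t)"

definition weight :: "('a::euclidean_space \<Rightarrow> real) \<Rightarrow> bool" where
  "weight w \<longleftrightarrow> w \<in> borel_measurable lborel \<and> (AE x in lborel. 0 < w x) \<and>
     (\<forall>K. compact K \<longrightarrow> set_integrable lborel K w)"

definition A_rho :: "('a::euclidean_space \<Rightarrow> real) \<Rightarrow> ('a \<Rightarrow> real) \<Rightarrow> ('a \<Rightarrow> real) \<Rightarrow> bool" where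
  "A_rho \<rho> r w \<longleftrightarrow> weight w \<and> (\<exists>\<theta> C. 0 \<le> \<theta> \<and> 0 < C \<and>
     (\<forall>x R. 0 < R \<longrightarrow>
        lux_norm r (\<lambda>y. w y * indicator (ball x R) y) *
        lux_norm (conj_exp r) (\<lambda>y. inverse (w y) * indicator (ball x R) y)
        \<le> ennreal (C * measure lborel (ball x R) * (1 + R / \<rho> x) powr \<theta>)))"

definition A_rho_pq :: "('a::euclidean_space \<Rightarrow> real) \<Rightarrow> ('a \<Rightarrow> real) \<Rightarrow> ('a \<Rightarrow> real) \<Rightarrow> ('a \<Rightarrow> real) \<Rightarrow> bool" where
  "A_rho_pq \<rho> p q w \<longleftrightarrow> weight w \<and> (\<exists>\<theta> C. 0 < \<theta> \<and> 0 < C \<and>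
     (\<forall>x R. 0 < R \<longrightarrow>
        lux_norm q (\<lambda>y. w y * indicator (ball x R) y) *
        lux_norm (conj_exp p) (\<lambda>y. inverse (w y) * indicator (ball x R) y)
        \<le> ennreal C * lux_norm q (indicator (ball x R)) *
           lux_norm (conj_exp p) (indicator (ball x R)) *
           ennreal ((1 + R / \<rho> x) powr \<theta>)))"

end

theory Submission
  imports Defs
begin

lemma le_from_above:
  fixes X :: ennreal
  assumes "\<And>t. a < t \<Longrightarrow> X \<le> ennreal t" "0 \<le> a"
  shows "X \<le> ennreal a"
proof (rule ccontr)
  assume "\<not> X \<le> ennreal a"
  hence "ennreal a < X" by simp
  then obtain z where z: "ennreal a < z" "z < X" using dense by blast
  then have "z \<noteq> \<infinity>" by auto
  then obtain t where t: "z = ennreal t" "0 \<le> t" by (cases z) auto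
  with z assms(2) have "a < t" by (simp add: ennreal_less_iff)
  with assms(1) have "X \<le> ennreal t" by blast
  with z t show False by simp
qed

lemma lux_le:
  assumes "0 < t" "(\<integral>\<^sup>+ x. ennreal ((\<bar>f x\<bar> / t) powr p x) \<partial>lborel) \<le> 1"
  shows "lux_norm p f \<le> ennreal t"
  unfolding lux_norm_def by (rule INF_lower2[of t]) (use assms in auto)

lemma lux_less:
  assumes "lux_norm p f < ennreal v"
  shows "\<exists>u. 0 < u \<and> u < v \<and> (\<integral>\<^sup>+ x. ennreal ((\<bar>f x\<bar> / u) powr p x) \<partial>lborel) \<le> 1"
proof -
  from assms obtain u where u: "0 < u" "(\<integral>\<^sup>+ x. ennreal ((\<bar>f x\<bar> / u) powr p x) \<partial>lborel) \<le> 1"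
     "ennreal u < ennreal v"
    unfolding lux_norm_def INF_less_iff by auto
  thus ?thesis by (auto simp: ennreal_less_iff)
qed

lemma lux_upward:
  assumes "0 < u" "u \<le> v" "\<forall>y. 0 \<le> p y"
    "(\<integral>\<^sup>+ x. ennreal ((\<bar>f x\<bar> / u) powr p x) \<partial>lborel) \<le> 1"
  shows "(\<integral>\<^sup>+ x. ennreal ((\<bar>f x\<bar> / v) powr p x) \<partial>lborel) \<le> 1"
proof -
  have "(\<integral>\<^sup>+ x. ennreal ((\<bar>f x\<bar> / v) powr p x) \<partial>lborel) \<le> (\<integral>\<^sup>+ x. ennreal ((\<bar>f x\<bar> / u) powr p x) \<partial>lborel)"
    apply (rule nn_integral_mono)
    apply (rule ennreal_leI)
    apply (rule powr_mono2)
    using assms by (auto intro: divide_left_mono)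
  with assms(4) show ?thesis by simp
qed

lemma lux_pow:
  fixes f g p r :: "'a::euclidean_space \<Rightarrow> real"
  assumes s: "0 < s" and ae: "AE y in lborel. r y = p y / s \<and> \<bar>g y\<bar> = \<bar>f y\<bar> powr s"
    and p: "\<forall>y. 0 \<le> p y" and b: "lux_norm p f \<le> ennreal b" "0 \<le> b"
  shows "lux_norm r g \<le> ennreal (b powr s)"
proof (rule le_from_above)
  show "0 \<le> b powr s" by simp
  fix t assume t: "b powr s < t"
  have t0: "0 < t" using t by (smt (verit) powr_ge_zero)
  define v where "v = t powr (1/s)"
  have v0: "0 < v" using t0 by (simp add: v_def)
  have "b < v"
  proof -
    have "(b powr s) powr (1/s) < t powr (1/s)"
      using t s by (intro powr_less_mono2) auto
    thus ?thesis using s b(2) by (simp add: powr_powr v_def)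
  qed
  hence "lux_norm p f < ennreal v" using b v0 by (smt (verit) ennreal_less_iff order_le_less_trans)
  then obtain u where u: "0 < u" "u < v" "(\<integral>\<^sup>+ x. ennreal ((\<bar>f x\<bar> / u) powr p x) \<partial>lborel) \<le> 1"
    using lux_less by blast
  have V: "(\<integral>\<^sup>+ x. ennreal ((\<bar>f x\<bar> / v) powr p x) \<partial>lborel) \<le> 1"
    using lux_upward[OF u(1) _ p u(3)] u(2) by simp
  have tv: "t = v powr s" using t0 s by (simp add: v_def powr_powr)
  have "(\<integral>\<^sup>+ x. ennreal ((\<bar>g x\<bar> / t) powr r x) \<partial>lborel) = (\<integral>\<^sup>+ x. ennreal ((\<bar>f x\<bar> / v) powr p x) \<partial>lborel)"
  proof (rule nn_integral_cong_AE)
    show "AE x in lborel. ennreal ((\<bar>g x\<bar> / t) powr r x) = ennreal ((\<bar>f x\<bar> / v) powr p x)"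
      using ae
    proof eventually_elim
      case (elim x)
      then have "(\<bar>g x\<bar> / t) powr r x = ((\<bar>f x\<bar> / v) powr s) powr (p x / s)"
        by (simp add: tv powr_divide)
      also have "\<dots> = (\<bar>f x\<bar> / v) powr p x" using s by (simp add: powr_powr)
      finally show ?case by simp
    qed
  qed
  with V have "(\<integral>\<^sup>+ x. ennreal ((\<bar>g x\<bar> / t) powr r x) \<partial>lborel) \<le> 1" by simp
  thus "lux_norm r g \<le> ennreal t" using lux_le t0 by blast
qed


lemma lux_ind:
  fixes q :: "'a::euclidean_space \<Rightarrow> real" and B :: "'a set"
  assumes B: "B \<in> sets lborel" "emeasure lborel B = ennreal m" "0 < m"
    and qb: "AE y in lborel. y \<in> B \<longrightarrow> 0 < q y \<and> \<bar>1 / q y - \<alpha>\<bar> \<le> \<delta>"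
  shows "lux_norm q (indicator B) \<le> ennreal (m powr \<alpha> * exp (\<delta> * \<bar>ln m\<bar>))"
proof -
  define \<beta> where "\<beta> = (if 1 \<le> m then \<alpha> + \<delta> else \<alpha> - \<delta>)"
  define t where "t = m powr \<beta>"
  have t0: "0 < t" using B by (simp add: t_def)
  have teq: "t = m powr \<alpha> * exp (\<delta> * \<bar>ln m\<bar>)"
    using B(3) by (auto simp: t_def \<beta>_def powr_add powr_diff powr_def exp_diff exp_add abs_if
        ln_ge_zero_iff not_le field_simps ln_less_zero simp flip: exp_add)
  have "(\<integral>\<^sup>+ y. ennreal ((\<bar>indicator B y\<bar> / t) powr q y) \<partial>lborel)
      \<le> (\<integral>\<^sup>+ y. ennreal (1/m) * indicator B y \<partial>lborel)"
  proof (rule nn_integral_mono_AE)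
    show "AE y in lborel. ennreal ((\<bar>indicator B y\<bar> / t) powr q y) \<le> ennreal (1/m) * indicator B y"
      using qb
    proof eventually_elim
      case (elim y)
      show ?case
      proof (cases "y \<in> B")
        case False thus ?thesis by simp
      next
        case True
        with elim have q0: "0 < q y" and qa: "\<bar>1 / q y - \<alpha>\<bar> \<le> \<delta>" by auto
        have "(1 / t) powr q y = m powr (- (\<beta> * q y))"
          using B(3) by (simp add: t_def powr_minus_divide powr_divide powr_powr)
        also have "\<dots> \<le> m powr (-1)"
        proof (cases "1 \<le> m")
          case True
          have "1 \<le> \<beta> * q y"
          proof -
            have "1 / q y \<le> \<beta>" using qa True by (simp add: \<beta>_def)
            thus ?thesis using q0 by (simp add: field_simps)
          qed
          thus ?thesis using True by (intro powr_mono) auto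
        next
          case False
          have "\<beta> * q y \<le> 1"
          proof -
            have "\<beta> \<le> 1 / q y" using qa False by (simp add: \<beta>_def)
            thus ?thesis using q0 by (simp add: field_simps)
          qed
          thus ?thesis using False B(3) by (intro powr_mono') auto
        qed
        also have "\<dots> = 1 / m" using B(3) by (simp add: powr_minus_divide)
        finally show ?thesis using True by (simp add: ennreal_leI)
      qed
    qed
  qed
  also have "\<dots> = ennreal (1/m) * ennreal m" using B by (simp add: nn_integral_cmult_indicator)
  also have "\<dots> = 1" using B(3) by (simp flip: ennreal_mult)
  finally have "(\<integral>\<^sup>+ y. ennreal ((\<bar>indicator B y\<bar> / t) powr q y) \<partial>lborel) \<le> 1" .
  from lux_le[OF t0 this] teq show ?thesis by simp
qed


lemma lux_pos:
  fixes f r :: "'a::euclidean_space \<Rightarrow> real" and B :: "'a set"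
  assumes B: "B \<in> sets lborel" "emeasure lborel B = ennreal m" "0 < m"
    and fm: "f \<in> borel_measurable lborel"
    and pos: "AE y in lborel. y \<in> B \<longrightarrow> 0 < f y \<and> 1 \<le> r y"
  shows "lux_norm r f \<noteq> 0"
proof -
  define E where "E k = B \<inter> {y. 1 / real (Suc k) < f y}" for k
  have Es: "E k \<in> sets lborel" for k unfolding E_def using B fm by measurable
  have "\<exists>k. emeasure lborel (E k) \<noteq> 0"
  proof (rule ccontr)
    assume "\<not> ?thesis"
    hence "\<forall>k. E k \<in> null_sets lborel" using Es by auto
    hence "\<forall>k. AE y in lborel. y \<notin> E k" using AE_not_in by blast
    hence "AE y in lborel. \<forall>k. y \<notin> E k" by (simp add: AE_all_countable)
    hence "AE y in lborel. y \<notin> B" using pos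
    proof eventually_elim
      case (elim y)
      show ?case
      proof
        assume yB: "y \<in> B"
        with elim have fy: "0 < f y" by auto
        then obtain k where "1 / real (Suc k) < f y" by (rule nat_approx_posE)
        with elim yB show False by (auto simp: E_def)
      qed
    qed
    hence "B \<in> null_sets lborel" using AE_iff_null_sets B(1) by blast
    with B show False by auto
  qed
  then obtain k where k: "emeasure lborel (E k) \<noteq> 0" by blast
  define \<eta> where "\<eta> = 1 / real (Suc k)"
  have \<eta>0: "0 < \<eta>" by (simp add: \<eta>_def)
  have "emeasure lborel (E k) \<le> emeasure lborel B" using Es B by (intro emeasure_mono) (auto simp: E_def)
  then obtain e where e: "emeasure lborel (E k) = ennreal e" "0 < e"
    using k B(2) by (cases "emeasure lborel (E k)") (auto simp: top_unique)
  show ?thesis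
  proof
    assume L: "lux_norm r f = 0"
    define \<epsilon> where "\<epsilon> = min \<eta> (\<eta> * e)"
    have \<epsilon>0: "0 < \<epsilon>" using \<eta>0 e by (simp add: \<epsilon>_def)
    hence "lux_norm r f < ennreal \<epsilon>" using L by simp
    then obtain u where u: "0 < u" "u < \<epsilon>" "(\<integral>\<^sup>+ x. ennreal ((\<bar>f x\<bar> / u) powr r x) \<partial>lborel) \<le> 1"
      using lux_less by blast
    have "(\<integral>\<^sup>+ x. ennreal (\<eta> / u) * indicator (E k) x \<partial>lborel) \<le> (\<integral>\<^sup>+ x. ennreal ((\<bar>f x\<bar> / u) powr r x) \<partial>lborel)"
    proof (rule nn_integral_mono_AE)
      show "AE x in lborel. ennreal (\<eta> / u) * indicator (E k) x \<le> ennreal ((\<bar>f x\<bar> / u) powr r x)"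
        using pos
      proof eventually_elim
        case (elim x)
        show ?case
        proof (cases "x \<in> E k")
          case False thus ?thesis by simp
        next
          case True
          hence xB: "x \<in> B" and fx: "\<eta> < f x" by (auto simp: E_def \<eta>_def)
          with elim have r1: "1 \<le> r x" by auto
          have "\<eta> / u \<le> \<bar>f x\<bar> / u" using fx u \<eta>0 by (simp add: divide_right_mono)
          have ge1: "1 \<le> \<bar>f x\<bar> / u" using fx u \<eta>0 unfolding \<epsilon>_def by (simp add: field_simps)
          have "\<eta> / u \<le> (\<bar>f x\<bar> / u) powr 1" using fx u \<eta>0 by (simp add: divide_right_mono)
          also have "\<dots> \<le> (\<bar>f x\<bar> / u) powr r x" using ge1 r1 by (intro powr_mono) auto
          finally show ?thesis using True by (simp add: ennreal_leI)
        qed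
      qed
    qed
    also have "\<dots> \<le> 1" by (rule u(3))
    finally have "ennreal (\<eta> / u) * ennreal e \<le> 1"
      using Es by (simp add: nn_integral_cmult_indicator e)
    hence "\<eta> / u * e \<le> 1" using u \<eta>0 e by (simp flip: ennreal_mult)
    moreover have "u < \<eta> * e" using u(2) by (simp add: \<epsilon>_def)
    ultimately show False using u \<eta>0 e by (simp add: field_simps)
  qed
qed


lemma inv_diff_le:
  fixes a b :: real assumes "1 \<le> a" "1 \<le> b"
  shows "\<bar>1/a - 1/b\<bar> \<le> \<bar>a - b\<bar>" "\<bar>1/a - 1/b\<bar> \<le> 1"
proof -
  have "\<bar>1/a - 1/b\<bar> = \<bar>b - a\<bar> / (a*b)" using assms by (simp add: field_simps abs_div)
  also have "\<dots> \<le> \<bar>b - a\<bar>"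
  proof -
    have "1 \<le> a*b" using assms by (metis mult_mono' mult_1 zero_le_one)
    have "\<bar>b - a\<bar> * 1 \<le> \<bar>b - a\<bar> * (a*b)" using \<open>1 \<le> a*b\<close> by (intro mult_left_mono) auto
    thus ?thesis using \<open>1 \<le> a*b\<close> by (simp add: divide_le_eq mult.commute)
  qed
  finally show "\<bar>1/a - 1/b\<bar> \<le> \<bar>a - b\<bar>" by simp
  have "0 < 1/a" "1/a \<le> 1" "0 < 1/b" "1/b \<le> 1" using assms by auto
  thus "\<bar>1/a - 1/b\<bar> \<le> 1" by linarith
qed

lemma ln_ball:
  fixes x :: "'a::euclidean_space"
  assumes "0 < R"
  shows "\<bar>ln (measure lborel (ball x R))\<bar> \<le> \<bar>ln (unit_ball_vol DIM('a))\<bar> + DIM('a) * \<bar>ln R\<bar>"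
    "0 < measure lborel (ball x R)"
proof -
  have m: "measure lborel (ball x R) = unit_ball_vol DIM('a) * R ^ DIM('a)"
    using assms by (simp add: content_ball)
  have V: "0 < unit_ball_vol DIM('a)" by simp
  show "0 < measure lborel (ball x R)" using m V assms by simp
  have "ln (measure lborel (ball x R)) = ln (unit_ball_vol DIM('a)) + DIM('a) * ln R"
    using m V assms by (simp add: ln_mult ln_realpow del: unit_ball_vol_pos)
  thus "\<bar>ln (measure lborel (ball x R))\<bar> \<le> \<bar>ln (unit_ball_vol DIM('a))\<bar> + DIM('a) * \<bar>ln R\<bar>"
    by (simp add: abs_mult abs_triangle_ineq[THEN order_trans])
qed

lemma ln_R_big:
  fixes R :: real assumes "1/4 \<le> R"
  shows "\<bar>ln R\<bar> \<le> ln (exp 1 + R) + ln 4"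
proof (cases "1 \<le> R")
  case True
  hence "\<bar>ln R\<bar> = ln R" by simp
  also have "\<dots> \<le> ln (exp 1 + R)" using True by (simp add: ln_le_cancel_iff add_pos_pos)
  finally show ?thesis by (smt (verit) ln_ge_zero_iff)
next
  case False
  have "0 < R" using assms by simp
  have "ln (1/4) \<le> ln R" using assms by (subst ln_le_cancel_iff) auto
  hence "- ln R \<le> ln 4" by (simp add: ln_div)
  moreover have "ln R \<le> 0" using False \<open>0<R\<close> by simp
  moreover have "0 \<le> ln (exp 1 + R)" using \<open>0<R\<close> by (intro ln_ge_zero) (smt (verit) one_le_exp_iff)
  ultimately show ?thesis by linarith
qed


lemma ln_e_ge1: "0 \<le> (r::real) \<Longrightarrow> 1 \<le> ln (exp 1 + r)"
proof -
  assume "0 \<le> r"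
  hence "ln (exp 1) \<le> ln (exp 1 + r)" by (subst ln_le_cancel_iff) (auto intro: add_pos_nonneg)
  thus ?thesis by simp
qed

lemma osc_bound:
  fixes \<rho> p :: "'a::euclidean_space \<Rightarrow> real"
  assumes crit: "critical_radius \<rho>" and plog: "P_log p"
  shows "\<exists>L \<theta>. 0 \<le> \<theta> \<and> (\<forall>x R. 0 < R \<longrightarrow> (\<exists>\<delta>\<ge>0. (\<forall>y\<in>ball x R. \<bar>1 / p y - 1 / p x\<bar> \<le> \<delta>) \<and>
      \<delta> * \<bar>ln (measure lborel (ball x R))\<bar> \<le> L + \<theta> * ln (1 + R / \<rho> x)))"
proof -
  have p1: "\<And>y. 1 \<le> p y" using plog by (auto simp: P_log_def var_exp_def)
  obtain Cp pinf where H1: "\<And>x y. dist x y < 1/2 \<Longrightarrow> \<bar>p x - p y\<bar> \<le> - Cp / ln (dist x y)"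
    and H2: "\<And>x. \<bar>p x - pinf\<bar> \<le> Cp / ln (exp 1 + norm x)"
    using plog unfolding P_log_def by blast
  have Cp0: "0 \<le> Cp" using H2[of 0] by simp
  have \<rho>0: "\<And>x. 0 < \<rho> x" using crit by (auto simp: critical_radius_def)
  obtain c N where c1: "1 \<le> c" and N1: "1 \<le> N"
    and H3: "\<And>x y. \<rho> y \<le> c * \<rho> x * (1 + dist x y / \<rho> x) powr (N / (N + 1))"
    using crit unfolding critical_radius_def by blast
  define V where "V = unit_ball_vol (real DIM('a))"
  define n where "n = real DIM('a)"
  define a where "a = N / (N + 1)"
  define k where "k = 4 + 2 / \<rho> 0"
  define Lc1 where "Lc1 = ln (4 * exp 1 + 1) + (N + 1) * (\<bar>ln (c * \<rho> 0)\<bar> + a * \<bar>ln k\<bar>)"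
  define L where "L = \<bar>ln V\<bar> * (Cp / ln 4 + 2 * Cp + 1) + n * Cp * (3 + 2 * ln 4) + n * ln 4 + n * Lc1"
  define \<theta> where "\<theta> = n * (N + 1)"
  have n0: "0 \<le> n" by (simp add: n_def)
  have a0: "0 \<le> a" "a < 1" using N1 by (auto simp: a_def)
  have ln4: "0 < ln (4::real)" by simp
  have Lc10: "0 \<le> Lc1"
  proof -
    have "0 \<le> ln (4 * exp 1 + 1::real)" by (intro ln_ge_zero) (smt (verit) exp_gt_zero)
    moreover have "0 \<le> (N + 1) * (\<bar>ln (c * \<rho> 0)\<bar> + a * \<bar>ln k\<bar>)" using N1 a0 by simp
    ultimately show ?thesis by (simp add: Lc1_def)
  qed
  have parts: "0 \<le> \<bar>ln V\<bar> * (Cp / ln 4)" "0 \<le> \<bar>ln V\<bar> * (2 * Cp)" "0 \<le> \<bar>ln V\<bar>"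
     "0 \<le> n * Cp" "0 \<le> n * Cp * (2 + 2 * ln 4)" "0 \<le> n * ln 4" "0 \<le> n * Lc1"
    using Cp0 n0 ln4 Lc10 by (auto intro!: mult_nonneg_nonneg divide_nonneg_nonneg add_nonneg_nonneg)
  have Ldef2: "L = \<bar>ln V\<bar> * (Cp / ln 4) + \<bar>ln V\<bar> * (2 * Cp) + \<bar>ln V\<bar> + n * Cp + n * Cp * (2 + 2 * ln 4) + n * ln 4 + n * Lc1"
    by (simp add: L_def algebra_simps)
  have main: "\<exists>\<delta>\<ge>0. (\<forall>y\<in>ball x R. \<bar>1 / p y - 1 / p x\<bar> \<le> \<delta>) \<and>
      \<delta> * \<bar>ln (measure lborel (ball x R))\<bar> \<le> L + \<theta> * ln (1 + R / \<rho> x)" if R0: "0 < R" for x R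
  proof -
    have lnm: "\<bar>ln (measure lborel (ball x R))\<bar> \<le> \<bar>ln V\<bar> + n * \<bar>ln R\<bar>"
      using ln_ball(1)[OF R0, of x] by (simp add: V_def n_def)
    have lnrho: "0 \<le> ln (1 + R / \<rho> x)" using R0 \<rho>0[of x] by (intro ln_ge_zero) auto
    have th0: "0 \<le> \<theta>" using n0 N1 by (simp add: \<theta>_def)
    have base: "L \<le> L + \<theta> * ln (1 + R / \<rho> x)" using th0 lnrho by simp
    show ?thesis
    proof (cases "R < 1/4")
      case True
      define \<delta> where "\<delta> = Cp / (- ln R)"
      have lnR: "ln R < 0" "ln 4 \<le> - ln R"
      proof -
        show "ln R < 0" using True R0 by simp
        have "ln R \<le> ln (1/4)" using True R0 by (subst ln_le_cancel_iff) auto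
        thus "ln 4 \<le> - ln R" by (simp add: ln_div)
      qed
      have d0: "0 \<le> \<delta>" using Cp0 lnR by (simp add: \<delta>_def divide_nonneg_neg)
      have "0 < (- ln R) * ln 4" using lnR(1) ln4 by (intro mult_pos_pos) auto
      hence dle: "\<delta> \<le> Cp / ln 4" unfolding \<delta>_def using divide_left_mono[OF lnR(2) Cp0] by simp
      have osc: "\<bar>1 / p y - 1 / p x\<bar> \<le> \<delta>" if y: "y \<in> ball x R" for y
      proof -
        have d: "dist x y < R" using y by simp
        have "\<bar>1 / p y - 1 / p x\<bar> \<le> \<bar>p y - p x\<bar>" using inv_diff_le p1 by blast
        also have "\<dots> \<le> - Cp / ln (dist x y)" using H1[of x y] d True by (simp add: abs_minus_commute)
        also have "\<dots> \<le> \<delta>"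
        proof (cases "dist x y = 0")
          case True thus ?thesis using d0 by simp
        next
          case False
          hence dp: "0 < dist x y" by simp
          have "ln (dist x y) < ln R" using dp d R0 by (subst ln_less_cancel_iff) auto
          hence "- ln R \<le> - ln (dist x y)" by simp
          moreover have "0 < (- ln (dist x y)) * (- ln R)" using lnR(1) \<open>ln (dist x y) < ln R\<close>
            by (intro mult_pos_pos) auto
          ultimately have "Cp / (- ln (dist x y)) \<le> Cp / (- ln R)"
            using divide_left_mono Cp0 by blast
          thus ?thesis by (simp add: \<delta>_def)
        qed
        finally show ?thesis .
      qed
      have "\<delta> * \<bar>ln (measure lborel (ball x R))\<bar> \<le> \<delta> * (\<bar>ln V\<bar> + n * \<bar>ln R\<bar>)"
        using lnm d0 by (intro mult_left_mono) auto
      also have "\<dots> = \<delta> * \<bar>ln V\<bar> + n * Cp" using lnR by (simp add: \<delta>_def field_simps)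
      also have "\<dots> \<le> \<bar>ln V\<bar> * (Cp / ln 4) + n * Cp" using mult_right_mono[OF dle, of "\<bar>ln V\<bar>"] by (simp add: mult.commute)
      also have "\<dots> \<le> L" unfolding Ldef2 using parts by linarith
      finally show ?thesis using osc d0 base by (intro exI[of _ \<delta>]) auto
    next
      case False
      hence R4: "1/4 \<le> R" by simp
      have lnR: "\<bar>ln R\<bar> \<le> ln (exp 1 + R) + ln 4" using ln_R_big[OF R4] .
      have le1: "1 \<le> ln (exp 1 + R)" using ln_e_ge1 R0 by simp
      have lnm2: "\<bar>ln (measure lborel (ball x R))\<bar> \<le> \<bar>ln V\<bar> + n * (ln (exp 1 + R) + ln 4)"
        using lnm mult_left_mono[OF lnR n0] by linarith
      show ?thesis
      proof (cases "2 * R \<le> norm x")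
        case True
        define \<delta> where "\<delta> = 2 * Cp / ln (exp 1 + R)"
        have d0: "0 \<le> \<delta>" using Cp0 le1 by (simp add: \<delta>_def)
        have dle: "\<delta> \<le> 2 * Cp" unfolding \<delta>_def using Cp0 le1 by (simp add: divide_le_eq mult_le_cancel_left1) 
        have far: "Cp / ln (exp 1 + norm z) \<le> Cp / ln (exp 1 + R)" if "R \<le> norm z" for z
        proof -
          have "ln (exp 1 + R) \<le> ln (exp 1 + norm z)" using that R0 by (subst ln_le_cancel_iff) (auto intro: add_pos_nonneg)
          thus ?thesis using Cp0 le1 by (intro divide_left_mono) auto
        qed
        have osc: "\<bar>1 / p y - 1 / p x\<bar> \<le> \<delta>" if y: "y \<in> ball x R" for y
        proof -
          have "norm x - norm y \<le> dist x y" by (simp add: dist_norm norm_triangle_ineq2)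
          hence ny: "R \<le> norm y" using y True by simp
          have "\<bar>1 / p y - 1 / p x\<bar> \<le> \<bar>p y - p x\<bar>" using inv_diff_le p1 by blast
          also have "\<dots> \<le> \<bar>p y - pinf\<bar> + \<bar>p x - pinf\<bar>" by linarith
          also have "\<dots> \<le> Cp / ln (exp 1 + R) + Cp / ln (exp 1 + R)"
            using H2[of y] H2[of x] far[OF ny] far[of x] True R0 by linarith
          finally show ?thesis by (simp add: \<delta>_def)
        qed
        have "\<delta> * \<bar>ln (measure lborel (ball x R))\<bar> \<le> \<delta> * (\<bar>ln V\<bar> + n * (ln (exp 1 + R) + ln 4))"
          using lnm2 d0 by (intro mult_left_mono) auto
        also have "\<dots> = \<delta> * \<bar>ln V\<bar> + n * 2 * Cp + n * \<delta> * ln 4" using le1 by (simp add: \<delta>_def field_simps)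
        also have "\<dots> \<le> \<bar>ln V\<bar> * (2 * Cp) + n * 2 * Cp + n * (2 * Cp) * ln 4"
        proof -
          have "\<delta> * \<bar>ln V\<bar> \<le> \<bar>ln V\<bar> * (2 * Cp)" using mult_right_mono[OF dle, of "\<bar>ln V\<bar>"] by (simp add: mult.commute)
          moreover have "n * \<delta> * ln 4 \<le> n * (2 * Cp) * ln 4"
            using dle n0 ln4 by (intro mult_right_mono mult_left_mono) auto
          ultimately show ?thesis by linarith
        qed
        also have "\<dots> \<le> L" unfolding Ldef2 using parts by (simp add: algebra_simps)
        finally show ?thesis using osc d0 base by (intro exI[of _ \<delta>]) auto
      next
        case False
        hence xR: "norm x < 2 * R" by simp
        have osc: "\<bar>1 / p y - 1 / p x\<bar> \<le> 1" for y using inv_diff_le p1 by blast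
        have rx: "ln (\<rho> x) \<le> ln (c * \<rho> 0) + a * ln (k * R)"
        proof -
          have k0: "0 < k" using \<rho>0[of 0] by (simp add: k_def add_pos_nonneg)
          have "1 + norm x / \<rho> 0 \<le> k * R"
          proof -
            have "norm x / \<rho> 0 \<le> 2 * R / \<rho> 0" using xR \<rho>0[of 0] by (simp add: divide_right_mono)
            moreover have "1 \<le> 4 * R" using R4 by simp
            moreover have "2 * R / \<rho> 0 \<le> (2 / \<rho> 0) * R" by simp
            ultimately show ?thesis unfolding k_def by (simp add: algebra_simps)
          qed
          have "\<rho> x \<le> c * \<rho> 0 * (1 + norm x / \<rho> 0) powr a"
            using H3[of x 0] by (simp add: a_def dist_norm)
          hence "ln (\<rho> x) \<le> ln (c * \<rho> 0 * (1 + norm x / \<rho> 0) powr a)"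
            using \<rho>0[of x] by (subst ln_le_cancel_iff) auto
          also have "\<dots> = ln (c * \<rho> 0) + a * ln (1 + norm x / \<rho> 0)"
          proof -
            have "0 < 1 + norm x / \<rho> 0" using \<rho>0[of 0] by (simp add: add_pos_nonneg)
            thus ?thesis using c1 \<rho>0[of 0] by (simp add: ln_mult ln_powr)
          qed
          also have "\<dots> \<le> ln (c * \<rho> 0) + a * ln (k * R)"
            using a0 \<open>1 + norm x / \<rho> 0 \<le> k * R\<close> \<rho>0[of 0]
            by (intro add_left_mono mult_left_mono) (auto simp: add_pos_nonneg intro!: ln_mono)
          finally show ?thesis .
        qed
        have k0: "0 < k" using \<rho>0[of 0] by (simp add: k_def add_pos_nonneg)
        have lR: "ln R \<le> (N + 1) * (ln (1 + R / \<rho> x) + \<bar>ln (c * \<rho> 0)\<bar> + a * \<bar>ln k\<bar>)"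
        proof -
          have "ln (R / \<rho> x) \<le> ln (1 + R / \<rho> x)" using R0 \<rho>0[of x] by (subst ln_le_cancel_iff) (auto intro: add_pos_pos)
          moreover have "ln (R / \<rho> x) = ln R - ln (\<rho> x)" using R0 \<rho>0[of x] by (simp add: ln_div)
          moreover have "ln (k * R) = ln k + ln R" using k0 R0 by (simp add: ln_mult)
          ultimately have "(1 - a) * ln R \<le> ln (1 + R / \<rho> x) + ln (c * \<rho> 0) + a * ln k"
            using rx by (simp add: algebra_simps)
          also have "\<dots> \<le> ln (1 + R / \<rho> x) + \<bar>ln (c * \<rho> 0)\<bar> + a * \<bar>ln k\<bar>"
            using a0 by (intro add_mono mult_left_mono) auto
          finally have "(1 - a) * ln R \<le> ln (1 + R / \<rho> x) + \<bar>ln (c * \<rho> 0)\<bar> + a * \<bar>ln k\<bar>" .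
          hence "(N + 1) * ((1 - a) * ln R) \<le> (N + 1) * (ln (1 + R / \<rho> x) + \<bar>ln (c * \<rho> 0)\<bar> + a * \<bar>ln k\<bar>)"
            using N1 by (intro mult_left_mono) auto
          moreover have "(N + 1) * ((1 - a) * ln R) = ln R" using N1 by (simp add: a_def field_simps)
          ultimately show ?thesis by simp
        qed
        have leR: "ln (exp 1 + R) \<le> Lc1 + (N + 1) * ln (1 + R / \<rho> x)"
        proof -
          have "exp 1 + R \<le> (4 * exp 1 + 1) * R" using R4 by (simp add: algebra_simps)
          hence "ln (exp 1 + R) \<le> ln ((4 * exp 1 + 1) * R)" using R0 by (subst ln_le_cancel_iff) (auto intro!: add_pos_pos mult_pos_pos)
          also have "\<dots> = ln (4 * exp 1 + 1) + ln R" using R0 ln_mult[of "4 * exp 1 + 1" R] by (smt (verit) exp_gt_zero)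
          finally show ?thesis using lR by (simp add: Lc1_def algebra_simps)
        qed
        have "1 * \<bar>ln (measure lborel (ball x R))\<bar> \<le> \<bar>ln V\<bar> + n * (ln (exp 1 + R) + ln 4)"
          using lnm2 by simp
        also have "\<dots> \<le> \<bar>ln V\<bar> + n * (Lc1 + (N + 1) * ln (1 + R / \<rho> x) + ln 4)"
          using leR n0 by (intro add_left_mono mult_left_mono) auto
        also have "\<dots> = \<bar>ln V\<bar> + n * ln 4 + n * Lc1 + \<theta> * ln (1 + R / \<rho> x)"
          by (simp add: \<theta>_def algebra_simps)
        also have "\<dots> \<le> L + \<theta> * ln (1 + R / \<rho> x)" unfolding Ldef2 using parts by linarith
        finally show ?thesis using osc by (intro exI[of _ 1]) auto
      qed
    qed
  qed
  show ?thesis using main N1 n0 by (intro exI[of _ L] exI[of _ \<theta>]) (auto simp: \<theta>_def)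
qed


lemma exp_alg:
  fixes P Q s :: real
  assumes "1 < P" "P < Q" "1 < s" "1 / P - 1 / Q = 1 / (s / (s - 1))"
  shows "conj_exp (\<lambda>_. conj_exp (\<lambda>_. P) () / s) () = Q / s"
    "s < conj_exp (\<lambda>_. P) ()"
proof -
  have Q0: "0 < Q" using assms by simp
  have e: "1 / Q = 1 / P - (s - 1) / s" using assms(4) by simp
  have "1 / Q > 0" using Q0 by simp
  hence "(s - 1) / s < 1 / P" using e by simp
  hence "(s - 1) * P < s" using assms by (simp add: field_simps)
  hence lt: "s < P / (P - 1)" using assms by (simp add: field_simps)
  thus "s < conj_exp (\<lambda>_. P) ()" by (simp add: conj_exp_def)
  have "Q = 1 / (1 / Q)" by simp
  also have "\<dots> = 1 / (1 / P - (s - 1) / s)" using e by simp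
  also have "\<dots> = P * s / (s - (s - 1) * P)" using assms by (simp add: field_simps)
  finally have Qe: "Q = P * s / (s - (s - 1) * P)" .
  have d: "s - (s - 1) * P \<noteq> 0" using \<open>(s - 1) * P < s\<close> by simp
  show "conj_exp (\<lambda>_. conj_exp (\<lambda>_. P) () / s) () = Q / s"
  proof -
    have d2: "P - (P - 1) * s \<noteq> 0" using d by (simp add: algebra_simps)
    have ps: "(P - 1) * s \<noteq> 0" using assms by simp
    have "conj_exp (\<lambda>_. P) () / s = P / ((P - 1) * s)" by (simp add: conj_exp_def)
    moreover have "(P / ((P - 1) * s)) / (P / ((P - 1) * s) - 1) = P / (P - (P - 1) * s)"
    proof -
      have "P / ((P - 1) * s) - 1 = (P - (P - 1) * s) / ((P - 1) * s)" using ps by (simp add: field_simps)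
      thus ?thesis using ps d2 by simp
    qed
    moreover have "Q / s = P / (P - (P - 1) * s)"
    proof -
      have "s - (s - 1) * P = P - (P - 1) * s" by (simp add: algebra_simps)
      hence "Q = P * s / (P - (P - 1) * s)" using Qe by simp
      thus ?thesis using assms by simp
    qed
    ultimately show ?thesis by (simp add: conj_exp_def)
  qed
qed

lemma pow_split:
  fixes u a s :: real assumes "0 \<le> u" "0 < s" "s \<le> a"
  shows "u powr s \<le> 1 + u powr a"
proof (cases "u \<le> 1")
  case True
  hence "u powr s \<le> 1" using assms by (intro powr_le1) auto
  thus ?thesis by (smt (verit) powr_ge_zero)
next
  case False
  hence "u powr s \<le> u powr a" using assms by (intro powr_mono) auto
  thus ?thesis by simp
qed


lemma ennreal_prod_le:
  fixes X Y :: ennreal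
  assumes "X \<le> ennreal a" "Y \<le> ennreal b" "0 \<le> a" "0 \<le> b"
  shows "X * Y \<le> ennreal (a * b)"
  using mult_mono[OF assms(1,2)] assms by (simp add: ennreal_mult)

theorem proposition11:
  fixes \<rho> p q w :: "'a::euclidean_space \<Rightarrow> real" and s :: real
  assumes "critical_radius \<rho>"
    and "P_log p" and "P_log q"
    and "1 < s"
    and "\<exists>pm. 1 < pm \<and> (AE x in lborel. pm \<le> p x)"
    and "\<forall>x. p x < q x"
    and "\<exists>qp. AE x in lborel. q x \<le> qp"
    and "\<forall>x. 1 / p x - 1 / q x = 1 / (s / (s - 1))"
    and "A_rho_pq \<rho> p q w"
  shows "A_rho \<rho> (\<lambda>x. conj_exp p x / s) (\<lambda>x. w x powr (- s))"
proof -
  note crit = assms(1) and plogp = assms(2) and plogq = assms(3) and s1 = assms(4)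
    and pq = assms(6) and rel = assms(8) and Apq = assms(9)
  have p1: "\<And>y. 1 \<le> p y" and pmeas: "p \<in> borel_measurable lborel"
    using plogp by (auto simp: P_log_def var_exp_def)
  have q1: "\<And>y. 1 \<le> q y" using plogq by (auto simp: P_log_def var_exp_def)
  obtain pm where pm: "1 < pm" "AE x in lborel. pm \<le> p x" using assms(5) by blast
  have AEp: "AE y in lborel. 1 < p y" using pm(2) by eventually_elim (use pm(1) in auto)
  obtain \<theta> C where wt: "weight w" and \<theta>0: "0 < \<theta>" and C0: "0 < C"
    and H: "\<And>x R. 0 < R \<Longrightarrow>
        lux_norm q (\<lambda>y. w y * indicator (ball x R) y) *
        lux_norm (conj_exp p) (\<lambda>y. inverse (w y) * indicator (ball x R) y)
        \<le> ennreal C * lux_norm q (indicator (ball x R)) *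
           lux_norm (conj_exp p) (indicator (ball x R)) *
           ennreal ((1 + R / \<rho> x) powr \<theta>)"
    using Apq unfolding A_rho_pq_def by blast
  have wm: "w \<in> borel_measurable lborel" and wpos: "AE y in lborel. 0 < w y"
    using wt by (auto simp: weight_def)
  have \<rho>0: "\<And>x. 0 < \<rho> x" using crit by (auto simp: critical_radius_def)
  obtain L \<theta>2 where \<theta>20: "0 \<le> \<theta>2" and OSC: "\<And>x R. 0 < R \<Longrightarrow> (\<exists>\<delta>\<ge>0. (\<forall>y\<in>ball x R. \<bar>1 / p y - 1 / p x\<bar> \<le> \<delta>) \<and>
      \<delta> * \<bar>ln (measure lborel (ball x R))\<bar> \<le> L + \<theta>2 * ln (1 + R / \<rho> x))"
    using osc_bound[OF crit plogp] by blast
  define C' where "C' = C powr s * exp (2 * s * L)"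
  define \<Theta> where "\<Theta> = 2 * s * \<theta>2 + \<theta> * s"
  have rel': "\<And>y. 1 / q y = 1 / p y - (s - 1) / s" using rel by (simp add: algebra_simps)
  have AEexp: "AE y in lborel. conj_exp (\<lambda>x. conj_exp p x / s) y = q y / s \<and> s < conj_exp p y"
    using AEp
  proof eventually_elim
    case (elim y)
    have "1 / p y - 1 / q y = 1 / (s / (s - 1))" using rel by blast
    from exp_alg[OF elim pq[rule_format] s1 this] show ?case by (simp add: conj_exp_def)
  qed
  have per_ball: "lux_norm (conj_exp p) (\<lambda>y. inverse (w y) * indicator (ball x R) y) \<noteq> \<infinity> \<and>
     lux_norm (\<lambda>x. conj_exp p x / s) (\<lambda>y. w y powr - s * indicator (ball x R) y) *
     lux_norm (conj_exp (\<lambda>x. conj_exp p x / s)) (\<lambda>y. inverse (w y powr - s) * indicator (ball x R) y)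
     \<le> ennreal (C' * measure lborel (ball x R) * (1 + R / \<rho> x) powr \<Theta>)"
    if R0: "0 < R" for x R
  proof -
    define B where "B = ball x R"
    define m where "m = measure lborel B"
    have m0: "0 < m" using ln_ball(2)[OF R0] by (simp add: m_def B_def)
    have Bs: "B \<in> sets lborel" by (simp add: B_def)
    have emB: "emeasure lborel B = ennreal m"
      using R0 by (simp add: B_def m_def emeasure_ball content_ball)
    obtain \<delta> where d0: "0 \<le> \<delta>" and osc: "\<forall>y\<in>B. \<bar>1 / p y - 1 / p x\<bar> \<le> \<delta>"
      and dl: "\<delta> * \<bar>ln m\<bar> \<le> L + \<theta>2 * ln (1 + R / \<rho> x)"
      using OSC[OF R0] unfolding B_def m_def by blast
    define E where "E = exp (\<delta> * \<bar>ln m\<bar>)"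
    define x0 where "x0 = m powr (1 / q x) * E"
    define y0 where "y0 = m powr (1 - 1 / p x) * E"
    define F where "F = (1 + R / \<rho> x) powr \<theta>"
    define G where "G = C * x0 * y0 * F"
    have Xb: "lux_norm q (indicator B) \<le> ennreal x0"
      unfolding x0_def E_def
    proof (rule lux_ind[OF Bs emB m0])
      show "AE y in lborel. y \<in> B \<longrightarrow> 0 < q y \<and> \<bar>1 / q y - 1 / q x\<bar> \<le> \<delta>"
        using osc q1 by (auto simp: rel' intro!: AE_I2 less_le_trans[OF zero_less_one])
    qed
    have Yb: "lux_norm (conj_exp p) (indicator B) \<le> ennreal y0"
      unfolding y0_def E_def
    proof (rule lux_ind[OF Bs emB m0])
      show "AE y in lborel. y \<in> B \<longrightarrow> 0 < conj_exp p y \<and> \<bar>1 / conj_exp p y - (1 - 1 / p x)\<bar> \<le> \<delta>"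
        using AEp
      proof eventually_elim
        case (elim y)
        have "0 < conj_exp p y" using elim by (simp add: conj_exp_def)
        moreover have "1 / conj_exp p y = 1 - 1 / p y" using elim by (simp add: conj_exp_def field_simps)
        moreover have "y \<in> B \<Longrightarrow> \<bar>1 / p y - 1 / p x\<bar> \<le> \<delta>" using osc by blast
        ultimately show ?case by auto
      qed
    qed
    have x00: "0 \<le> x0" "0 \<le> y0" "0 \<le> F" "0 \<le> G"
      by (auto simp: x0_def y0_def E_def F_def G_def C0 less_imp_le)
    have HB: "lux_norm q (\<lambda>y. w y * indicator B y) * lux_norm (conj_exp p) (\<lambda>y. inverse (w y) * indicator B y)
        \<le> ennreal G"
    proof -
      have "lux_norm q (\<lambda>y. w y * indicator B y) * lux_norm (conj_exp p) (\<lambda>y. inverse (w y) * indicator B y)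
        \<le> ennreal C * lux_norm q (indicator B) * lux_norm (conj_exp p) (indicator B) * ennreal F"
        using H[OF R0] by (simp add: B_def F_def)
      also have "\<dots> \<le> ennreal C * ennreal x0 * ennreal y0 * ennreal F"
        by (intro mult_mono Xb Yb order_refl) auto
      also have "\<dots> = ennreal G" using C0 x00 by (simp add: G_def ennreal_mult)
      finally show ?thesis .
    qed
    define Bq where "Bq = lux_norm q (\<lambda>y. w y * indicator B y)"
    define Ap where "Ap = lux_norm (conj_exp p) (\<lambda>y. inverse (w y) * indicator B y)"
    have Bq0: "Bq \<noteq> 0" unfolding Bq_def
    proof (rule lux_pos[OF Bs emB m0])
      show "(\<lambda>y. w y * indicator B y) \<in> borel_measurable lborel" using wm Bs by measurable
      show "AE y in lborel. y \<in> B \<longrightarrow> 0 < w y * indicator B y \<and> 1 \<le> q y"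
        using wpos by eventually_elim (auto simp: q1)
    qed
    have HB': "Bq * Ap \<le> ennreal G" using HB by (simp add: Bq_def Ap_def)
    have Apfin: "Ap \<noteq> \<infinity>"
    proof
      assume "Ap = \<infinity>"
      hence "Bq * Ap = \<infinity>" using Bq0 by simp
      with HB' show False by (simp add: top_unique)
    qed
    then obtain a where a: "Ap = ennreal a" "0 \<le> a" by (cases Ap) auto
    have L1: "lux_norm (\<lambda>x. conj_exp p x / s) (\<lambda>y. w y powr - s * indicator B y) \<le> ennreal (a powr s)"
    proof (rule lux_pow)
      show "0 < s" using s1 by simp
      show "\<forall>y. 0 \<le> conj_exp p y" unfolding conj_exp_def proof fix y show "0 \<le> p y / (p y - 1)" using p1[of y] by (intro divide_nonneg_nonneg) auto qed
      show "lux_norm (conj_exp p) (\<lambda>y. inverse (w y) * indicator B y) \<le> ennreal a" using a by (simp add: Ap_def)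
      show "0 \<le> a" by fact
      show "AE y in lborel. conj_exp p y / s = conj_exp p y / s \<and>
          \<bar>w y powr - s * indicator B y\<bar> = \<bar>inverse (w y) * indicator B y\<bar> powr s"
        using wpos
      proof eventually_elim
        case (elim y)
        thus ?case using s1 by (auto simp: indicator_def powr_minus inverse_powr)
      qed
    qed
    show ?thesis
    proof (cases "Bq = \<infinity>")
      case True
      have "Ap = 0"
      proof (rule ccontr)
        assume "Ap \<noteq> 0"
        hence "Bq * Ap = \<infinity>" using True by simp
        with HB' show False by (simp add: top_unique)
      qed
      hence "a = 0" using a by simp
      hence "lux_norm (\<lambda>x. conj_exp p x / s) (\<lambda>y. w y powr - s * indicator B y) = 0" using L1 by simp
      thus ?thesis using Apfin by (simp add: Ap_def B_def)
    next
      case False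
      then obtain b where b: "Bq = ennreal b" "0 \<le> b" by (cases Bq) auto
      have L2: "lux_norm (conj_exp (\<lambda>x. conj_exp p x / s)) (\<lambda>y. inverse (w y powr - s) * indicator B y) \<le> ennreal (b powr s)"
      proof (rule lux_pow)
        show "0 < s" using s1 by simp
        show "\<forall>y. 0 \<le> q y" using q1 by (smt (verit))
        show "lux_norm q (\<lambda>y. w y * indicator B y) \<le> ennreal b" using b by (simp add: Bq_def)
        show "0 \<le> b" by fact
        show "AE y in lborel. conj_exp (\<lambda>x. conj_exp p x / s) y = q y / s \<and>
            \<bar>inverse (w y powr - s) * indicator B y\<bar> = \<bar>w y * indicator B y\<bar> powr s"
          using wpos AEexp
        proof eventually_elim
          case (elim y)
          thus ?case using s1 by (auto simp: indicator_def powr_minus)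
        qed
      qed
      have ab: "b * a \<le> G" using HB' a b x00 by (simp add: ennreal_mult[symmetric])
      have "lux_norm (\<lambda>x. conj_exp p x / s) (\<lambda>y. w y powr - s * indicator B y) *
          lux_norm (conj_exp (\<lambda>x. conj_exp p x / s)) (\<lambda>y. inverse (w y powr - s) * indicator B y)
          \<le> ennreal (a powr s * b powr s)"
        by (rule ennreal_prod_le[OF L1 L2]) auto
      also have "a powr s * b powr s = (b * a) powr s" using a b by (simp add: powr_mult mult.commute)
      also have "(b * a) powr s \<le> G powr s" using ab a b s1 by (intro powr_mono2) auto
      also have "G powr s \<le> C' * m * (1 + R / \<rho> x) powr \<Theta>"
      proof -
        define Z where "Z = ln (1 + R / \<rho> x)"
        define lm where "lm = ln m"
        have Zp: "1 + R / \<rho> x > 0" using R0 \<rho>0[of x] by (simp add: add_pos_pos)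
        have sum: "1 / q x + (1 - 1 / p x) = 1 / s" using rel'[of x] s1 by (simp add: field_simps)
        have x0e: "x0 = exp (lm * (1 / q x) + \<delta> * \<bar>lm\<bar>)"
          using m0 by (simp add: x0_def E_def powr_def lm_def exp_add mult.commute)
        have y0e: "y0 = exp (lm * (1 - 1 / p x) + \<delta> * \<bar>lm\<bar>)"
          using m0 by (simp add: y0_def E_def powr_def lm_def exp_add mult.commute)
        have Fe: "F = exp (\<theta> * Z)" using Zp by (simp add: F_def powr_def Z_def mult.commute)
        have Ce: "C = exp (ln C)" using C0 by simp
        have "G = exp (ln C) * exp (lm * (1 / q x) + \<delta> * \<bar>lm\<bar>) * exp (lm * (1 - 1 / p x) + \<delta> * \<bar>lm\<bar>) * exp (\<theta> * Z)"
          unfolding G_def using x0e y0e Fe Ce by metis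
        also have "\<dots> = exp (ln C + (lm * (1 / q x) + \<delta> * \<bar>lm\<bar>) + (lm * (1 - 1 / p x) + \<delta> * \<bar>lm\<bar>) + \<theta> * Z)"
          by (simp only: exp_add)
        also have "\<dots> = exp (ln C + lm * (1 / q x + (1 - 1 / p x)) + 2 * (\<delta> * \<bar>lm\<bar>) + \<theta> * Z)"
          by (rule arg_cong[where f=exp]) (simp add: algebra_simps)
        also have "\<dots> = exp (ln C + lm * (1 / s) + 2 * (\<delta> * \<bar>lm\<bar>) + \<theta> * Z)"
          by (simp only: sum)
        finally have "G powr s = exp (ln C + lm * (1 / s) + 2 * (\<delta> * \<bar>lm\<bar>) + \<theta> * Z) powr s" by simp
        also have "\<dots> = exp ((ln C + lm * (1 / s) + 2 * (\<delta> * \<bar>lm\<bar>) + \<theta> * Z) * s)"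
          by (rule exp_powr_real)
        also have "\<dots> = exp (s * ln C + lm + 2 * s * (\<delta> * \<bar>lm\<bar>) + s * \<theta> * Z)"
          using s1 by (intro arg_cong[where f=exp]) (simp add: algebra_simps)
        also have "\<dots> \<le> exp (s * ln C + lm + 2 * s * (L + \<theta>2 * Z) + s * \<theta> * Z)"
          using dl s1 by (simp add: lm_def Z_def)
        also have "\<dots> = C' * m * (1 + R / \<rho> x) powr \<Theta>"
        proof -
          have "C' * m * (1 + R / \<rho> x) powr \<Theta> = exp (s * ln C) * exp (2 * s * L) * exp lm * exp (\<Theta> * Z)"
            using m0 C0 Zp by (simp add: C'_def Z_def lm_def powr_def mult.commute)
          also have "\<dots> = exp (s * ln C + 2 * s * L + lm + \<Theta> * Z)" by (simp only: exp_add)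
          also have "\<dots> = exp (s * ln C + lm + 2 * s * (L + \<theta>2 * Z) + s * \<theta> * Z)"
            by (intro arg_cong[where f=exp]) (simp add: \<Theta>_def algebra_simps)
          finally show ?thesis by simp
        qed
        finally show ?thesis .
      qed
      finally show ?thesis using Apfin by (simp add: Ap_def B_def m_def ennreal_leI)
    qed
  qed
  have wmeas: "(\<lambda>x. w x powr - s) \<in> borel_measurable lborel" using wm by measurable
  have wpos': "AE x in lborel. 0 < w x powr - s" using wpos by eventually_elim simp
  have locint: "set_integrable lborel K (\<lambda>x. w x powr - s)" if K: "compact K" for K
  proof -
    obtain R where R0: "0 < R" and KB: "K \<subseteq> ball 0 R"
      using bounded_subset_ballD[OF compact_imp_bounded[OF K]] by blast
    define B where "B = ball (0::'a) R"
    have Ks: "K \<in> sets lborel" using K by (simp add: compact_imp_closed)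
    have Bs: "B \<in> sets lborel" by (simp add: B_def)
    define m where "m = measure lborel B"
    have emB: "emeasure lborel B = ennreal m"
      using R0 by (simp add: B_def m_def emeasure_ball content_ball)
    have "lux_norm (conj_exp p) (\<lambda>y. inverse (w y) * indicator B y) \<noteq> \<infinity>"
      using per_ball[OF R0] by (simp add: B_def)
    then obtain a where a: "lux_norm (conj_exp p) (\<lambda>y. inverse (w y) * indicator B y) = ennreal a" "0 \<le> a"
      by (cases "lux_norm (conj_exp p) (\<lambda>y. inverse (w y) * indicator B y)") auto
    hence "lux_norm (conj_exp p) (\<lambda>y. inverse (w y) * indicator B y) < ennreal (a + 1)"
      by (simp add: ennreal_less_iff)
    then obtain t where t: "0 < t" "(\<integral>\<^sup>+ y. ennreal ((\<bar>inverse (w y) * indicator B y\<bar> / t) powr conj_exp p y) \<partial>lborel) \<le> 1"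
      using lux_less by blast
    define g where "g y = (\<bar>inverse (w y) * indicator B y\<bar> / t) powr (p y / (p y - 1))" for y
    have gm1: "(\<lambda>y. p y / (p y - 1)) \<in> borel_measurable lborel"
      using pmeas by (intro borel_measurable_divide borel_measurable_diff) auto
    have gm2: "(\<lambda>y. \<bar>inverse (w y) * indicator B y\<bar> / t) \<in> borel_measurable lborel"
      using wm Bs by (intro borel_measurable_divide borel_measurable_abs borel_measurable_times
          borel_measurable_inverse borel_measurable_indicator) auto
    have gm: "g \<in> borel_measurable lborel" unfolding g_def by (rule powr_real_measurable[OF gm2 gm1])
    have gint: "(\<integral>\<^sup>+ y. ennreal (g y) \<partial>lborel) \<le> 1" using t(2) by (simp add: g_def conj_exp_def)
    have "(\<integral>\<^sup>+ y. ennreal (norm (indicator K y *\<^sub>R w y powr - s)) \<partial>lborel)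
        \<le> (\<integral>\<^sup>+ y. ennreal (t powr s) * (indicator B y + ennreal (g y)) \<partial>lborel)"
    proof (rule nn_integral_mono_AE)
      show "AE y in lborel. ennreal (norm (indicator K y *\<^sub>R w y powr - s)) \<le> ennreal (t powr s) * (indicator B y + ennreal (g y))"
        using wpos AEexp
      proof eventually_elim
        case (elim y)
        show ?case
        proof (cases "y \<in> K")
          case False thus ?thesis by simp
        next
          case True
          hence yB: "y \<in> B" using KB by (auto simp: B_def)
          define u where "u = inverse (w y) / t"
          have u0: "0 \<le> u" using elim t by (simp add: u_def)
          have gy: "g y = u powr conj_exp p y" using yB elim by (simp add: g_def u_def conj_exp_def)
          have "w y powr - s = t powr s * u powr s"
            using elim t by (simp add: u_def powr_divide powr_minus inverse_powr)
          also have "\<dots> \<le> t powr s * (1 + u powr conj_exp p y)"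
            using pow_split[OF u0, of s "conj_exp p y"] elim s1 by (intro mult_left_mono) auto
          finally have le: "w y powr - s \<le> t powr s * (1 + g y)" using gy by simp
          have "ennreal (norm (indicator K y *\<^sub>R w y powr - s)) = ennreal (w y powr - s)"
            using True by simp
          also have "\<dots> \<le> ennreal (t powr s * (1 + g y))" using le by (rule ennreal_leI)
          also have "\<dots> = ennreal (t powr s) * (indicator B y + ennreal (g y))"
          proof -
            have g0: "0 \<le> g y" by (simp add: g_def)
            have "ennreal (t powr s * (1 + g y)) = ennreal (t powr s) * (ennreal 1 + ennreal (g y))"
              using g0 by (simp add: ennreal_mult ennreal_plus)
            thus ?thesis using yB by simp
          qed
          finally show ?thesis .
        qed
      qed
    qed
    also have "\<dots> = ennreal (t powr s) * ((\<integral>\<^sup>+ y. indicator B y \<partial>lborel) + (\<integral>\<^sup>+ y. ennreal (g y) \<partial>lborel))"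
      using Bs gm by (simp add: nn_integral_cmult nn_integral_add)
    also have "\<dots> \<le> ennreal (t powr s) * (ennreal m + 1)"
      using Bs emB gint by (intro mult_left_mono add_mono) auto
    also have "\<dots> < \<infinity>" by (simp add: ennreal_mult_less_top)
    finally have fin: "(\<integral>\<^sup>+ y. ennreal (norm (indicator K y *\<^sub>R w y powr - s)) \<partial>lborel) < \<infinity>" .
    have meas: "(\<lambda>y. indicator K y *\<^sub>R w y powr - s) \<in> borel_measurable lborel"
      by (rule borel_measurable_scaleR[OF borel_measurable_indicator[OF Ks] wmeas])
    show ?thesis unfolding set_integrable_def
      by (rule integrableI_bounded[OF meas fin])
  qed
  have wt': "weight (\<lambda>x. w x powr - s)"
    unfolding weight_def using wmeas wpos' locint by blast
  have T0: "0 \<le> \<Theta>" using \<theta>20 \<theta>0 s1 by (simp add: \<Theta>_def)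
  have C'0: "0 < C'" using C0 by (simp add: C'_def)
  show ?thesis unfolding A_rho_def
    apply (rule conjI[OF wt'])
    apply (rule exI[of _ \<Theta>])
    apply (rule exI[of _ C'])
    apply (intro conjI allI impI T0 C'0)
    apply (rule conjunct2[OF per_ball])
    apply assumption
    done
qed

end
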